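(* Let $G$ be a finitely generated group with finite generating set $S_G$ and let $H\neq 1$ be a finite group. Equip $H\wr G$ with the word metric with respect to $(H\setminus\{1\})\cup S_G$. If the growth function of $G$ is not bounded by a linear function, then $\mathrm{dim}_{AN}(H\wr G)=\infty$.
   Context: Wreath product: for groups $A,B$ let $A^{(B)}$ be the group of finitely supported functions $B\to A$, with $B$ acting by $(bf)(\gamma)=f(b^{-1}\gamma)$; $A\wr B$ is the set of pairs $(f,b)$ with product $(f_1,b_1)(f_2,b_2)=(f_1\cdot(b_1f_2),b_1b_2)$, with $b\in B$ identified with $(1,b)$ and $a\in A$ with $(f_a,1)$, where $f_a(1)=a$, $f_a(\gamma)=1$ for $\gamma\ne1$. Word metric w.r.t. $S$: $d(x,y)=$ length of $x^{-1}y$ in $S\cup S^{-1}$. Growth function: $\gamma(r)=\#\{g\in G:|g|_{S_G}<r\}$; boundedness by a linear function is independent of $S_G$. For a metric space $X$, $r>0$: an $r$-path is a sequence with consecutive distances $<r$; $r$-components of $Y\subseteq X$ are the classes of points joined by $r$-paths in $Y$. An $n$-dimensional control function of $X$ is $D:\mathbb{R}_+\to\mathbb{R}_+\cup\{\infty\}$ such that for each $r>0$ there is a cover $\{X_0,\dots,X_n\}$ of $X$ with every open ball $B(x,r)$ contained in some $X_i$ and every $r$-component of each $X_i$ of diameter at most $D(r)$. $\mathrm{dim}_{AN}(X)$ is the smallest $n$ such that $X$ has an $n$-dimensional control function of the form $D(r)=Cr$, $C>0$ ($\infty$ if none). *)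

theory Defs
  imports "HOL-Algebra.Algebra" "HOL-Library.Extended_Real"
begin

definition word_length :: "('a, 'm) monoid_scheme \<Rightarrow> 'a set \<Rightarrow> 'a \<Rightarrow> nat" where
  "word_length W T x =
     (LEAST n. \<exists>ws. length ws = n \<and> set ws \<subseteq> T \<union> m_inv W ` T \<and>
                    x = foldr (\<otimes>\<^bsub>W\<^esub>) ws \<one>\<^bsub>W\<^esub>)"

definition word_dist :: "('a, 'm) monoid_scheme \<Rightarrow> 'a set \<Rightarrow> 'a \<Rightarrow> 'a \<Rightarrow> real" where
  "word_dist W T x y = real (word_length W T (inv\<^bsub>W\<^esub> x \<otimes>\<^bsub>W\<^esub> y))"

definition growth :: "('a, 'm) monoid_scheme \<Rightarrow> 'a set \<Rightarrow> real \<Rightarrow> nat" where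
  "growth W T r = card {g \<in> carrier W. real (word_length W T g) < r}"

definition growth_linearly_bounded :: "('a, 'm) monoid_scheme \<Rightarrow> 'a set \<Rightarrow> bool" where
  "growth_linearly_bounded W T \<longleftrightarrow> (\<exists>a b::real. \<forall>r\<ge>0. real (growth W T r) \<le> a * r + b)"

definition wreath :: "('h, 'x) monoid_scheme \<Rightarrow> ('g, 'y) monoid_scheme \<Rightarrow> (('g \<Rightarrow> 'h) \<times> 'g) monoid" where
  "wreath H G =
    \<lparr> carrier = {(f, b). (\<forall>\<gamma>\<in>carrier G. f \<gamma> \<in> carrier H)
                      \<and> (\<forall>\<gamma>. \<gamma> \<notin> carrier G \<longrightarrow> f \<gamma> = \<one>\<^bsub>H\<^esub>)
                      \<and> finite {\<gamma> \<in> carrier G. f \<gamma> \<noteq> \<one>\<^bsub>H\<^esub>}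
                      \<and> b \<in> carrier G},
      monoid.mult = (\<lambda>(f1, b1) (f2, b2).
                ((\<lambda>\<gamma>. if \<gamma> \<in> carrier G then f1 \<gamma> \<otimes>\<^bsub>H\<^esub> f2 (inv\<^bsub>G\<^esub> b1 \<otimes>\<^bsub>G\<^esub> \<gamma>) else \<one>\<^bsub>H\<^esub>),
                 b1 \<otimes>\<^bsub>G\<^esub> b2)),
      monoid.one = (\<lambda>_. \<one>\<^bsub>H\<^esub>, \<one>\<^bsub>G\<^esub>) \<rparr>"

definition wr_base :: "('h, 'x) monoid_scheme \<Rightarrow> ('g, 'y) monoid_scheme \<Rightarrow> 'h \<Rightarrow> ('g \<Rightarrow> 'h) \<times> 'g" where
  "wr_base H G a = ((\<lambda>\<gamma>. if \<gamma> = \<one>\<^bsub>G\<^esub> then a else \<one>\<^bsub>H\<^esub>), \<one>\<^bsub>G\<^esub>)"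

definition wr_top :: "('h, 'x) monoid_scheme \<Rightarrow> ('g, 'y) monoid_scheme \<Rightarrow> 'g \<Rightarrow> ('g \<Rightarrow> 'h) \<times> 'g" where
  "wr_top H G b = ((\<lambda>_. \<one>\<^bsub>H\<^esub>), b)"

definition wr_gens :: "('h, 'x) monoid_scheme \<Rightarrow> ('g, 'y) monoid_scheme \<Rightarrow> 'g set \<Rightarrow> (('g \<Rightarrow> 'h) \<times> 'g) set" where
  "wr_gens H G S = wr_base H G ` (carrier H - {\<one>\<^bsub>H\<^esub>}) \<union> wr_top H G ` S"

definition r_connected :: "('a \<Rightarrow> 'a \<Rightarrow> real) \<Rightarrow> real \<Rightarrow> 'a set \<Rightarrow> 'a \<Rightarrow> 'a \<Rightarrow> bool" where
  "r_connected d r Y x y \<longleftrightarrow>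
     (\<exists>ps. ps \<noteq> [] \<and> hd ps = x \<and> last ps = y \<and> set ps \<subseteq> Y \<and>
           (\<forall>i. Suc i < length ps \<longrightarrow> d (nth ps i) (nth ps (Suc i)) < r))"

definition open_ball :: "'a set \<Rightarrow> ('a \<Rightarrow> 'a \<Rightarrow> real) \<Rightarrow> 'a \<Rightarrow> real \<Rightarrow> 'a set" where
  "open_ball M dist0 p rad = {q \<in> M. dist0 p q < rad}"

text \<open>D is an n-dimensional control function of (M,d).  Diameter of every
  r-component at most D(r) is written as: any two points of the component are
  at distance at most D(r).\<close>
definition control_function :: "'a set \<Rightarrow> ('a \<Rightarrow> 'a \<Rightarrow> real) \<Rightarrow> nat \<Rightarrow> (real \<Rightarrow> ereal) \<Rightarrow> bool" where
  "control_function M d n D \<longleftrightarrow>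
     (\<forall>r>0. \<exists>U :: nat \<Rightarrow> 'a set.
        (\<forall>i\<le>n. U i \<subseteq> M) \<and> (\<Union>i\<le>n. U i) = M \<and>
        (\<forall>x\<in>M. \<exists>i\<le>n. open_ball M d x r \<subseteq> U i) \<and>
        (\<forall>i\<le>n. \<forall>x y. r_connected d r (U i) x y \<longrightarrow> ereal (d x y) \<le> D r))"

definition dim_AN :: "'a set \<Rightarrow> ('a \<Rightarrow> 'a \<Rightarrow> real) \<Rightarrow> enat" where
  "dim_AN M d =
     (if \<exists>n. \<exists>C>0. control_function M d n (\<lambda>r. ereal (C * r))
      then enat (LEAST n. \<exists>C>0. control_function M d n (\<lambda>r. ereal (C * r)))
      else \<infinity>)"

end

theory Submission
  imports Defs "HOL-Analysis.Brouwer_Fixpoint"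
begin


lemma wr_mult: "(f1, b1) \<otimes>\<^bsub>wreath H G\<^esub> (f2, b2) =
  ((\<lambda>\<gamma>. if \<gamma> \<in> carrier G then f1 \<gamma> \<otimes>\<^bsub>H\<^esub> f2 (inv\<^bsub>G\<^esub> b1 \<otimes>\<^bsub>G\<^esub> \<gamma>) else \<one>\<^bsub>H\<^esub>), b1 \<otimes>\<^bsub>G\<^esub> b2)"
  by (simp add: wreath_def)

lemma wr_one: "\<one>\<^bsub>wreath H G\<^esub> = (\<lambda>_. \<one>\<^bsub>H\<^esub>, \<one>\<^bsub>G\<^esub>)"
  by (simp add: wreath_def)

lemma wr_carrier: "(f, b) \<in> carrier (wreath H G) \<longleftrightarrow>
   (\<forall>\<gamma>\<in>carrier G. f \<gamma> \<in> carrier H) \<and> (\<forall>\<gamma>. \<gamma> \<notin> carrier G \<longrightarrow> f \<gamma> = \<one>\<^bsub>H\<^esub>)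
    \<and> finite {\<gamma> \<in> carrier G. f \<gamma> \<noteq> \<one>\<^bsub>H\<^esub>} \<and> b \<in> carrier G"
  by (simp add: wreath_def)

locale wrc = G: group G + H: group H for G :: "('g,'x) monoid_scheme" and H :: "('h,'y) monoid_scheme"
begin

lemma closed:
  assumes "(f1, b1) \<in> carrier (wreath H G)" "(f2, b2) \<in> carrier (wreath H G)"
  shows "(f1, b1) \<otimes>\<^bsub>wreath H G\<^esub> (f2, b2) \<in> carrier (wreath H G)"
proof -
  let ?F = "(\<lambda>\<gamma>. if \<gamma> \<in> carrier G then f1 \<gamma> \<otimes>\<^bsub>H\<^esub> f2 (inv\<^bsub>G\<^esub> b1 \<otimes>\<^bsub>G\<^esub> \<gamma>) else \<one>\<^bsub>H\<^esub>)"
  have s: "{\<gamma> \<in> carrier G. ?F \<gamma> \<noteq> \<one>\<^bsub>H\<^esub>} \<subseteq> {\<gamma> \<in> carrier G. f1 \<gamma> \<noteq> \<one>\<^bsub>H\<^esub>} \<union>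
        (\<lambda>\<delta>. b1 \<otimes>\<^bsub>G\<^esub> \<delta>) ` {\<gamma> \<in> carrier G. f2 \<gamma> \<noteq> \<one>\<^bsub>H\<^esub>}"
  proof
    fix \<gamma> assume g: "\<gamma> \<in> {\<gamma> \<in> carrier G. ?F \<gamma> \<noteq> \<one>\<^bsub>H\<^esub>}"
    show "\<gamma> \<in> {\<gamma> \<in> carrier G. f1 \<gamma> \<noteq> \<one>\<^bsub>H\<^esub>} \<union> (\<lambda>\<delta>. b1 \<otimes>\<^bsub>G\<^esub> \<delta>) ` {\<gamma> \<in> carrier G. f2 \<gamma> \<noteq> \<one>\<^bsub>H\<^esub>}"
    proof (cases "f1 \<gamma> = \<one>\<^bsub>H\<^esub>")
      case True
      then have "f2 (inv\<^bsub>G\<^esub> b1 \<otimes>\<^bsub>G\<^esub> \<gamma>) \<noteq> \<one>\<^bsub>H\<^esub>" using g assms by (auto simp: wr_carrier)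
      moreover have "\<gamma> = b1 \<otimes>\<^bsub>G\<^esub> (inv\<^bsub>G\<^esub> b1 \<otimes>\<^bsub>G\<^esub> \<gamma>)" using g assms
        by (simp add: wr_carrier G.m_assoc[symmetric])
      ultimately show ?thesis using g assms by (auto simp: wr_carrier)
    qed (use g in auto)
  qed
  have "finite {\<gamma> \<in> carrier G. ?F \<gamma> \<noteq> \<one>\<^bsub>H\<^esub>}"
    by (rule finite_subset[OF s]) (use assms in \<open>auto simp: wr_carrier\<close>)
  then show ?thesis using assms by (auto simp: wr_carrier wr_mult)
qed

lemma closed': "x \<in> carrier (wreath H G) \<Longrightarrow> y \<in> carrier (wreath H G) \<Longrightarrow> x \<otimes>\<^bsub>wreath H G\<^esub> y \<in> carrier (wreath H G)"
  using closed by (cases x, cases y) auto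

lemma one_closed: "\<one>\<^bsub>wreath H G\<^esub> \<in> carrier (wreath H G)"
  by (simp add: wr_one wr_carrier)

lemma assoc:
  assumes "x \<in> carrier (wreath H G)" "y \<in> carrier (wreath H G)" "z \<in> carrier (wreath H G)"
  shows "x \<otimes>\<^bsub>wreath H G\<^esub> y \<otimes>\<^bsub>wreath H G\<^esub> z = x \<otimes>\<^bsub>wreath H G\<^esub> (y \<otimes>\<^bsub>wreath H G\<^esub> z)"
proof -
  obtain f1 b1 f2 b2 f3 b3 where e: "x = (f1,b1)" "y = (f2,b2)" "z = (f3,b3)" by (cases x, cases y, cases z) auto
  have c: "\<forall>\<gamma>\<in>carrier G. f1 \<gamma> \<in> carrier H" "\<forall>\<gamma>\<in>carrier G. f2 \<gamma> \<in> carrier H" "\<forall>\<gamma>\<in>carrier G. f3 \<gamma> \<in> carrier H"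
    "b1 \<in> carrier G" "b2 \<in> carrier G" "b3 \<in> carrier G"
    using assms e by (auto simp: wr_carrier)
  have "\<And>\<gamma>. \<gamma> \<in> carrier G \<Longrightarrow> inv\<^bsub>G\<^esub> (b1 \<otimes>\<^bsub>G\<^esub> b2) \<otimes>\<^bsub>G\<^esub> \<gamma> = inv\<^bsub>G\<^esub> b2 \<otimes>\<^bsub>G\<^esub> (inv\<^bsub>G\<^esub> b1 \<otimes>\<^bsub>G\<^esub> \<gamma>)"
    using c by (simp add: G.inv_mult_group G.m_assoc)
  note inv2 = this
  show ?thesis unfolding e wr_mult
  proof (rule prod_eqI; simp only: fst_conv snd_conv)
    show "b1 \<otimes>\<^bsub>G\<^esub> b2 \<otimes>\<^bsub>G\<^esub> b3 = b1 \<otimes>\<^bsub>G\<^esub> (b2 \<otimes>\<^bsub>G\<^esub> b3)"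
      using c by (simp add: G.m_assoc)
  next
    show "(\<lambda>\<gamma>. if \<gamma> \<in> carrier G then (if \<gamma> \<in> carrier G then f1 \<gamma> \<otimes>\<^bsub>H\<^esub> f2 (inv\<^bsub>G\<^esub> b1 \<otimes>\<^bsub>G\<^esub> \<gamma>) else \<one>\<^bsub>H\<^esub>)
             \<otimes>\<^bsub>H\<^esub> f3 (inv\<^bsub>G\<^esub> (b1 \<otimes>\<^bsub>G\<^esub> b2) \<otimes>\<^bsub>G\<^esub> \<gamma>) else \<one>\<^bsub>H\<^esub>) =
          (\<lambda>\<gamma>. if \<gamma> \<in> carrier G then f1 \<gamma> \<otimes>\<^bsub>H\<^esub> (if inv\<^bsub>G\<^esub> b1 \<otimes>\<^bsub>G\<^esub> \<gamma> \<in> carrier G then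
             f2 (inv\<^bsub>G\<^esub> b1 \<otimes>\<^bsub>G\<^esub> \<gamma>) \<otimes>\<^bsub>H\<^esub> f3 (inv\<^bsub>G\<^esub> b2 \<otimes>\<^bsub>G\<^esub> (inv\<^bsub>G\<^esub> b1 \<otimes>\<^bsub>G\<^esub> \<gamma>)) else \<one>\<^bsub>H\<^esub>) else \<one>\<^bsub>H\<^esub>)"
    proof (rule ext)
      fix \<gamma>
      show "(if \<gamma> \<in> carrier G then (if \<gamma> \<in> carrier G then f1 \<gamma> \<otimes>\<^bsub>H\<^esub> f2 (inv\<^bsub>G\<^esub> b1 \<otimes>\<^bsub>G\<^esub> \<gamma>) else \<one>\<^bsub>H\<^esub>)
             \<otimes>\<^bsub>H\<^esub> f3 (inv\<^bsub>G\<^esub> (b1 \<otimes>\<^bsub>G\<^esub> b2) \<otimes>\<^bsub>G\<^esub> \<gamma>) else \<one>\<^bsub>H\<^esub>) =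
          (if \<gamma> \<in> carrier G then f1 \<gamma> \<otimes>\<^bsub>H\<^esub> (if inv\<^bsub>G\<^esub> b1 \<otimes>\<^bsub>G\<^esub> \<gamma> \<in> carrier G then
             f2 (inv\<^bsub>G\<^esub> b1 \<otimes>\<^bsub>G\<^esub> \<gamma>) \<otimes>\<^bsub>H\<^esub> f3 (inv\<^bsub>G\<^esub> b2 \<otimes>\<^bsub>G\<^esub> (inv\<^bsub>G\<^esub> b1 \<otimes>\<^bsub>G\<^esub> \<gamma>)) else \<one>\<^bsub>H\<^esub>) else \<one>\<^bsub>H\<^esub>)"
      proof (cases "\<gamma> \<in> carrier G")
        case True
        have m: "inv\<^bsub>G\<^esub> b1 \<otimes>\<^bsub>G\<^esub> \<gamma> \<in> carrier G" "inv\<^bsub>G\<^esub> b2 \<otimes>\<^bsub>G\<^esub> (inv\<^bsub>G\<^esub> b1 \<otimes>\<^bsub>G\<^esub> \<gamma>) \<in> carrier G"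
          using c True by auto
        have h: "f1 \<gamma> \<in> carrier H" "f2 (inv\<^bsub>G\<^esub> b1 \<otimes>\<^bsub>G\<^esub> \<gamma>) \<in> carrier H"
           "f3 (inv\<^bsub>G\<^esub> b2 \<otimes>\<^bsub>G\<^esub> (inv\<^bsub>G\<^esub> b1 \<otimes>\<^bsub>G\<^esub> \<gamma>)) \<in> carrier H"
          using c m True by auto
        show ?thesis using True m h inv2[OF True] by (simp add: H.m_assoc)
      qed simp
    qed
  qed
qed

lemma l_one: "x \<in> carrier (wreath H G) \<Longrightarrow> \<one>\<^bsub>wreath H G\<^esub> \<otimes>\<^bsub>wreath H G\<^esub> x = x"
  by (cases x) (auto simp: wr_one wr_mult wr_carrier intro!: ext)

definition winv :: "('g \<Rightarrow> 'h) \<times> 'g \<Rightarrow> ('g \<Rightarrow> 'h) \<times> 'g" where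
  "winv x = (\<lambda>\<gamma>. if \<gamma> \<in> carrier G then inv\<^bsub>H\<^esub> (fst x (snd x \<otimes>\<^bsub>G\<^esub> \<gamma>)) else \<one>\<^bsub>H\<^esub>, inv\<^bsub>G\<^esub> (snd x))"

lemma winv_closed:
  assumes "x \<in> carrier (wreath H G)"
  shows "winv x \<in> carrier (wreath H G)"
proof -
  obtain f b where e: "x = (f,b)" by (cases x)
  have b: "b \<in> carrier G" using assms e by (simp add: wr_carrier)
  have s: "{\<gamma> \<in> carrier G. fst (winv x) \<gamma> \<noteq> \<one>\<^bsub>H\<^esub>} \<subseteq> (\<lambda>\<delta>. inv\<^bsub>G\<^esub> b \<otimes>\<^bsub>G\<^esub> \<delta>) ` {\<gamma> \<in> carrier G. f \<gamma> \<noteq> \<one>\<^bsub>H\<^esub>}"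
  proof
    fix \<gamma> assume g: "\<gamma> \<in> {\<gamma> \<in> carrier G. fst (winv x) \<gamma> \<noteq> \<one>\<^bsub>H\<^esub>}"
    then have "f (b \<otimes>\<^bsub>G\<^esub> \<gamma>) \<noteq> \<one>\<^bsub>H\<^esub>" by (auto simp: winv_def e)
    moreover have "\<gamma> = inv\<^bsub>G\<^esub> b \<otimes>\<^bsub>G\<^esub> (b \<otimes>\<^bsub>G\<^esub> \<gamma>)" using g b by (simp add: G.m_assoc[symmetric])
    ultimately show "\<gamma> \<in> (\<lambda>\<delta>. inv\<^bsub>G\<^esub> b \<otimes>\<^bsub>G\<^esub> \<delta>) ` {\<gamma> \<in> carrier G. f \<gamma> \<noteq> \<one>\<^bsub>H\<^esub>}"
      using g b by blast
  qed
  have "finite {\<gamma> \<in> carrier G. fst (winv x) \<gamma> \<noteq> \<one>\<^bsub>H\<^esub>}"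
    by (rule finite_subset[OF s]) (use assms e in \<open>auto simp: wr_carrier\<close>)
  then show ?thesis using assms e by (auto simp: wr_carrier winv_def)
qed

lemma winv_l: "x \<in> carrier (wreath H G) \<Longrightarrow> winv x \<otimes>\<^bsub>wreath H G\<^esub> x = \<one>\<^bsub>wreath H G\<^esub>"
  by (cases x) (auto simp: wr_one wr_mult wr_carrier winv_def G.m_assoc[symmetric] intro!: ext)

lemma group_W: "group (wreath H G)"
proof (rule groupI)
  show "\<exists>y\<in>carrier (wreath H G). y \<otimes>\<^bsub>wreath H G\<^esub> x = \<one>\<^bsub>wreath H G\<^esub>"
    if "x \<in> carrier (wreath H G)" for x
    using winv_closed[OF that] winv_l[OF that] by blast
qed (auto simp: closed' one_closed assoc l_one)

end


definition hasw :: "('a, 'm) monoid_scheme \<Rightarrow> 'a set \<Rightarrow> 'a \<Rightarrow> bool" where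
  "hasw W T x \<longleftrightarrow> (\<exists>ws. set ws \<subseteq> T \<union> m_inv W ` T \<and> x = foldr (\<otimes>\<^bsub>W\<^esub>) ws \<one>\<^bsub>W\<^esub>)"

context group
begin

lemma foldr_closed: "set ws \<subseteq> carrier G \<Longrightarrow> foldr (\<otimes>) ws \<one> \<in> carrier G"
  by (induction ws) auto

lemma foldr_app: "set ws1 \<subseteq> carrier G \<Longrightarrow> set ws2 \<subseteq> carrier G \<Longrightarrow>
   foldr (\<otimes>) (ws1 @ ws2) \<one> = foldr (\<otimes>) ws1 \<one> \<otimes> foldr (\<otimes>) ws2 \<one>"
  by (induction ws1) (auto simp: foldr_closed m_assoc)

lemma foldr_inv: "set ws \<subseteq> carrier G \<Longrightarrow> foldr (\<otimes>) (rev (map (m_inv G) ws)) \<one> = inv (foldr (\<otimes>) ws \<one>)"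
proof (induction ws)
  case (Cons a ws)
  have "foldr (\<otimes>) (rev (map (m_inv G) (a # ws))) \<one> = foldr (\<otimes>) (rev (map (m_inv G) ws) @ [m_inv G a]) \<one>" by simp
  also have "\<dots> = foldr (\<otimes>) (rev (map (m_inv G) ws)) \<one> \<otimes> foldr (\<otimes>) [m_inv G a] \<one>"
    using Cons.prems by (intro foldr_app) auto
  also have "\<dots> = inv (foldr (\<otimes>) ws \<one>) \<otimes> inv a" using Cons by simp
  also have "\<dots> = inv (a \<otimes> foldr (\<otimes>) ws \<one>)" using Cons.prems by (simp add: inv_mult_group foldr_closed)
  finally show ?case by simp
qed simp

lemma letters_carrier: "T \<subseteq> carrier G \<Longrightarrow> T \<union> m_inv G ` T \<subseteq> carrier G"
  by auto

lemma letters_inv: assumes "T \<subseteq> carrier G" "set ws \<subseteq> T \<union> m_inv G ` T" shows "set (rev (map (m_inv G) ws)) \<subseteq> T \<union> m_inv G ` T"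
proof
  fix y assume "y \<in> set (rev (map (m_inv G) ws))"
  then obtain z where z: "z \<in> set ws" "y = inv z" by auto
  then have "z \<in> T \<or> z \<in> m_inv G ` T" using assms by auto
  then show "y \<in> T \<union> m_inv G ` T"
  proof
    assume "z \<in> T" then show ?thesis using z by auto
  next
    assume "z \<in> m_inv G ` T"
    then obtain t where t: "t \<in> T" "z = inv t" by auto
    then have "y = t" using z assms by auto
    then show ?thesis using t by auto
  qed
qed

lemma wl_le: "set ws \<subseteq> T \<union> m_inv G ` T \<Longrightarrow> word_length G T (foldr (\<otimes>) ws \<one>) \<le> length ws"
  unfolding word_length_def by (rule Least_le) blast

lemma wl_word: "hasw G T x \<Longrightarrow> \<exists>ws. length ws = word_length G T x \<and> set ws \<subseteq> T \<union> m_inv G ` T \<and> x = foldr (\<otimes>) ws \<one>"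
  unfolding word_length_def hasw_def by (rule LeastI_ex) blast

lemma hasw_carrier: "T \<subseteq> carrier G \<Longrightarrow> hasw G T x \<Longrightarrow> x \<in> carrier G"
  unfolding hasw_def using foldr_closed by blast

lemma wl_mult:
  assumes T: "T \<subseteq> carrier G" and x: "hasw G T x" and y: "hasw G T y"
  shows "hasw G T (x \<otimes> y) \<and> word_length G T (x \<otimes> y) \<le> word_length G T x + word_length G T y"
proof -
  obtain ws1 where w1: "length ws1 = word_length G T x" "set ws1 \<subseteq> T \<union> m_inv G ` T" "x = foldr (\<otimes>) ws1 \<one>"
    using wl_word[OF x] by blast
  obtain ws2 where w2: "length ws2 = word_length G T y" "set ws2 \<subseteq> T \<union> m_inv G ` T" "y = foldr (\<otimes>) ws2 \<one>"
    using wl_word[OF y] by blast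
  have "foldr (\<otimes>) (ws1 @ ws2) \<one> = foldr (\<otimes>) ws1 \<one> \<otimes> foldr (\<otimes>) ws2 \<one>"
    using w1 w2 letters_carrier[OF T] by (intro foldr_app) auto
  then have e: "x \<otimes> y = foldr (\<otimes>) (ws1 @ ws2) \<one>" using w1 w2 by simp
  have s: "set (ws1 @ ws2) \<subseteq> T \<union> m_inv G ` T" using w1 w2 by auto
  have "word_length G T (foldr (\<otimes>) (ws1 @ ws2) \<one>) \<le> length (ws1 @ ws2)" by (rule wl_le[OF s])
  then have "word_length G T (x \<otimes> y) \<le> length (ws1 @ ws2)" by (simp only: e)
  moreover have "hasw G T (x \<otimes> y)" unfolding hasw_def using s e by blast
  ultimately show ?thesis using w1 w2 by simp
qed

lemma wl_inv:
  assumes T: "T \<subseteq> carrier G" and x: "hasw G T x"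
  shows "hasw G T (inv x) \<and> word_length G T (inv x) \<le> word_length G T x"
proof -
  obtain ws where w: "length ws = word_length G T x" "set ws \<subseteq> T \<union> m_inv G ` T" "x = foldr (\<otimes>) ws \<one>"
    using wl_word[OF x] by blast
  have "foldr (\<otimes>) (rev (map (m_inv G) ws)) \<one> = inv (foldr (\<otimes>) ws \<one>)"
    using w letters_carrier[OF T] by (intro foldr_inv) auto
  then have e: "inv x = foldr (\<otimes>) (rev (map (m_inv G) ws)) \<one>" using w by simp
  have s: "set (rev (map (m_inv G) ws)) \<subseteq> T \<union> m_inv G ` T" using letters_inv[OF T w(2)] .
  have "word_length G T (foldr (\<otimes>) (rev (map (m_inv G) ws)) \<one>) \<le> length (rev (map (m_inv G) ws))" by (rule wl_le[OF s])
  then have "word_length G T (inv x) \<le> length (rev (map (m_inv G) ws))" by (simp only: e)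
  moreover have "hasw G T (inv x)" unfolding hasw_def using s e by blast
  ultimately show ?thesis using w by simp
qed

lemma wl_gen:
  assumes "T \<subseteq> carrier G" "t \<in> T"
  shows "hasw G T t \<and> word_length G T t \<le> 1"
proof -
  have e: "foldr (\<otimes>) [t] \<one> = t" using assms by auto
  have s: "set [t] \<subseteq> T \<union> m_inv G ` T" using assms by auto
  have "word_length G T (foldr (\<otimes>) [t] \<one>) \<le> length [t]" by (rule wl_le[OF s])
  then have "word_length G T t \<le> length [t]" by (simp only: e)
  moreover have "hasw G T t" unfolding hasw_def using s e by metis
  ultimately show ?thesis by simp
qed

lemma wl_one: "hasw G T \<one> \<and> word_length G T \<one> = 0"
proof -
  have s: "set [] \<subseteq> T \<union> m_inv G ` T" by auto
  have "word_length G T (foldr (\<otimes>) [] \<one>) \<le> 0" using wl_le[OF s] by simp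
  then have "word_length G T \<one> = 0" by simp
  moreover have "hasw G T \<one>" unfolding hasw_def by (intro exI[of _ "[]"]) simp
  ultimately show ?thesis by blast
qed

lemma generate_hasw:
  assumes T: "T \<subseteq> carrier G" and g: "g \<in> generate G T"
  shows "hasw G T g"
  using g
proof (induction rule: generate.induct)
  case one then show ?case using wl_one by blast
next
  case (incl h) then show ?case using wl_gen[OF T] by blast
next
  case (inv h) then show ?case using wl_gen[OF T] wl_inv[OF T] by blast
next
  case (eng h1 h2) then show ?case using wl_mult[OF T] by blast
qed

end

lemma hom_hasw:
  assumes G: "group G" and W: "group W" and h: "h \<in> hom G W" and S: "S \<subseteq> carrier G"
    and T: "T \<subseteq> carrier W" and hS: "h ` S \<subseteq> T" and g: "hasw G S g"
  shows "hasw W T (h g) \<and> word_length W T (h g) \<le> word_length G S g"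
proof -
  interpret GW: group_hom G W h using G W h by (simp add: group_hom_def group_hom_axioms_def)
  obtain ws where w: "length ws = word_length G S g" "set ws \<subseteq> S \<union> m_inv G ` S" "g = foldr (\<otimes>\<^bsub>G\<^esub>) ws \<one>\<^bsub>G\<^esub>"
    using group.wl_word[OF G g] by blast
  have "set ws \<subseteq> carrier G \<Longrightarrow> h (foldr (\<otimes>\<^bsub>G\<^esub>) ws \<one>\<^bsub>G\<^esub>) = foldr (\<otimes>\<^bsub>W\<^esub>) (map h ws) \<one>\<^bsub>W\<^esub>" for ws
  proof (induction ws)
    case (Cons a ws)
    have "h (foldr (\<otimes>\<^bsub>G\<^esub>) (a # ws) \<one>\<^bsub>G\<^esub>) = h (a \<otimes>\<^bsub>G\<^esub> foldr (\<otimes>\<^bsub>G\<^esub>) ws \<one>\<^bsub>G\<^esub>)" by simp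
    also have "\<dots> = h a \<otimes>\<^bsub>W\<^esub> h (foldr (\<otimes>\<^bsub>G\<^esub>) ws \<one>\<^bsub>G\<^esub>)"
      using Cons.prems group.foldr_closed[OF G, of ws] by (intro GW.hom_mult) auto
    also have "\<dots> = foldr (\<otimes>\<^bsub>W\<^esub>) (map h (a # ws)) \<one>\<^bsub>W\<^esub>" using Cons by simp
    finally show ?case .
  qed simp
  then have e: "h g = foldr (\<otimes>\<^bsub>W\<^esub>) (map h ws) \<one>\<^bsub>W\<^esub>" using w S by auto
  have s: "set (map h ws) \<subseteq> T \<union> m_inv W ` T"
  proof
    fix y assume "y \<in> set (map h ws)"
    then obtain x where x: "x \<in> set ws" "y = h x" by auto
    then have "x \<in> S \<or> (\<exists>s\<in>S. x = inv\<^bsub>G\<^esub> s)" using w by auto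
    then show "y \<in> T \<union> m_inv W ` T"
    proof
      assume "x \<in> S" then show ?thesis using x hS by auto
    next
      assume "\<exists>s\<in>S. x = inv\<^bsub>G\<^esub> s"
      then obtain s where "s \<in> S" "x = inv\<^bsub>G\<^esub> s" by auto
      then have "y = inv\<^bsub>W\<^esub> (h s)" using x S by auto
      then show ?thesis using \<open>s \<in> S\<close> hS by auto
    qed
  qed
  have "word_length W T (foldr (\<otimes>\<^bsub>W\<^esub>) (map h ws) \<one>\<^bsub>W\<^esub>) \<le> length (map h ws)" by (rule group.wl_le[OF W s])
  then have "word_length W T (h g) \<le> length (map h ws)" by (simp only: e)
  moreover have "hasw W T (h g)" unfolding hasw_def using s e by blast
  ultimately show ?thesis using w by simp
qed



definition grid :: "nat \<Rightarrow> nat \<Rightarrow> (nat \<Rightarrow> nat) set" where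
  "grid d p = {x. (\<forall>j<d. x j \<le> p) \<and> (\<forall>j\<ge>d. x j = 0)}"

definition near :: "(nat \<Rightarrow> nat) \<Rightarrow> (nat \<Rightarrow> nat) \<Rightarrow> bool" where
  "near x y \<longleftrightarrow> (\<forall>j. x j \<le> y j + 2 \<and> y j \<le> x j + 2)"

definition ipath :: "nat \<Rightarrow> nat \<Rightarrow> ((nat \<Rightarrow> nat) \<Rightarrow> nat) \<Rightarrow> nat \<Rightarrow> (nat \<Rightarrow> nat) list \<Rightarrow> bool" where
  "ipath d p c i zs \<longleftrightarrow> zs \<noteq> [] \<and> set zs \<subseteq> grid d p \<and> (\<forall>z\<in>set zs. c z = i) \<and>
     (\<forall>k. Suc k < length zs \<longrightarrow> near (zs ! k) (zs ! Suc k))"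

lemma ipath_snoc:
  assumes "ipath d p c i zs" "v \<in> grid d p" "c v = i" "near (last zs) v"
  shows "ipath d p c i (zs @ [v])"
  unfolding ipath_def
proof (intro conjI allI impI)
  fix k assume k: "Suc k < length (zs @ [v])"
  show "near ((zs @ [v]) ! k) ((zs @ [v]) ! Suc k)"
  proof (cases "Suc k < length zs")
    case True then show ?thesis using assms(1) by (simp add: nth_append ipath_def)
  next
    case False
    then have "Suc k = length zs" using k by simp
    moreover have "zs \<noteq> []" using assms(1) by (simp add: ipath_def)
    ultimately have "k = length zs - 1" "zs \<noteq> []" by auto
    then show ?thesis using assms(4) by (simp add: nth_append last_conv_nth)
  qed
qed (use assms in \<open>auto simp: ipath_def\<close>)

lemma hex:
  fixes d p :: nat and c :: "(nat \<Rightarrow> nat) \<Rightarrow> nat"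
  assumes d: "0 < d" and p: "0 < p" and col: "\<forall>x\<in>grid d p. c x < d"
  shows "\<exists>i<d. \<exists>zs. ipath d p c i zs \<and> hd zs i \<le> 1 \<and> p \<le> last zs i + 1"
proof (rule ccontr)
  assume "\<not> ?thesis"
  then have hyp: "\<And>i zs. i < d \<Longrightarrow> ipath d p c i zs \<Longrightarrow> hd zs i \<le> 1 \<Longrightarrow> last zs i + 1 < p"
    by (meson not_le)
  define W where "W i = {u. \<exists>zs. ipath d p c i zs \<and> hd zs i \<le> 1 \<and> last zs = u}" for i
  have W_base: "u \<in> W i" if "u \<in> grid d p" "c u = i" "u i \<le> 1" for u i
    unfolding W_def using that by (intro CollectI exI[of _ "[u]"]) (auto simp: ipath_def)
  have W_ext: "v \<in> W i" if uW: "u \<in> W i" and vv:  "v \<in> grid d p" "c v = i" "near u v" for u v i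
  proof -
    obtain zs where zs: "ipath d p c i zs" "hd zs i \<le> 1" "last zs = u" using uW unfolding W_def by blast
    have "zs \<noteq> []" using zs by (simp add: ipath_def)
    then show ?thesis unfolding W_def using ipath_snoc[OF zs(1) vv(1,2)] zs vv(3)
      by (intro CollectI exI[of _ "zs @ [v]"]) auto
  qed
  have W_bound: "u i + 1 < p" if "i < d" "u \<in> W i" for u i
    using that hyp W_def by auto
  have W_grid: "u \<in> grid d p" if uW: "u \<in> W i" for u i
  proof -
    obtain zs where zs: "ipath d p c i zs" "last zs = u" using uW unfolding W_def by blast
    then show ?thesis by (auto simp: ipath_def)
  qed
  define rs where "rs x = (\<lambda>j. if j < d then x j else 0)" for x :: "nat \<Rightarrow> nat"
  define close where "close x u \<longleftrightarrow> (\<forall>j. x j \<le> u j + 1 \<and> u j \<le> x j + 1)" for x u :: "nat \<Rightarrow> nat"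
  define label where "label x i = (if x i = 0 \<or> (\<exists>u\<in>W i. close (rs x) u) then 0 else (1::nat))" for x i
  obtain q where q1: "\<forall>i<d. q i < p"
    and q2: "\<forall>i<d. \<exists>r s. (\<forall>j<d. q j \<le> r j \<and> r j \<le> q j + 1) \<and> (\<forall>j<d. q j \<le> s j \<and> s j \<le> q j + 1) \<and> label r i \<noteq> label s i"
  proof (rule kuhn_lemma[of p d label])
    show "0 < p" by (rule p)
    show "\<forall>x. (\<forall>i<d. x i \<le> p) \<longrightarrow> (\<forall>i<d. label x i = 0 \<or> label x i = 1)"
      by (simp add: label_def)
    show "\<forall>x. (\<forall>i<d. x i \<le> p) \<longrightarrow> (\<forall>i<d. x i = 0 \<longrightarrow> label x i = 0)"
      by (simp add: label_def)
    show "\<forall>x. (\<forall>i<d. x i \<le> p) \<longrightarrow> (\<forall>i<d. x i = p \<longrightarrow> label x i = 1)"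
    proof (intro allI impI)
      fix x i assume "\<forall>i<d. x i \<le> p" "i < d" "x i = p"
      have "\<not> close (rs x) u" if uW: "u \<in> W i" for u
      proof
        assume "close (rs x) u"
        then have "rs x i \<le> u i + 1" unfolding close_def by blast
        then have "p \<le> u i + 1" using \<open>x i = p\<close> \<open>i < d\<close> by (simp add: rs_def)
        then show False using W_bound[OF \<open>i < d\<close> uW] by linarith
      qed
      then show "label x i = 1" using p \<open>x i = p\<close> by (auto simp: label_def)
    qed
  qed
  define v where "v = rs q"
  have vg: "v \<in> grid d p" using q1 by (auto simp: grid_def v_def rs_def less_imp_le)
  define i where "i = c v"
  have i: "i < d" using col vg i_def by auto
  have A: "v \<in> W i" if w: "\<forall>j<d. q j \<le> w j \<and> w j \<le> q j + 1" and lw: "label w i = 0" for w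
  proof (cases "w i = 0")
    case True
    then have "v i \<le> 1" using w i by (auto simp: v_def rs_def)
    then show ?thesis using W_base[OF vg] i_def by auto
  next
    case False
    then obtain u where u: "u \<in> W i" "close (rs w) u" using lw by (auto simp: label_def split: if_splits)
    have ug: "u \<in> grid d p" using W_grid[OF u(1)] .
    have "near u v" unfolding near_def
    proof
      fix j show "u j \<le> v j + 2 \<and> v j \<le> u j + 2"
      proof (cases "j < d")
        case True
        have "rs w j \<le> u j + 1" "u j \<le> rs w j + 1" using u(2) unfolding close_def by blast+
        then have "w j \<le> u j + 1" "u j \<le> w j + 1" using True by (simp_all add: rs_def)
        moreover have "q j \<le> w j" "w j \<le> q j + 1" using w True by auto
        moreover have "v j = q j" using True by (simp add: v_def rs_def)
        ultimately show ?thesis by linarith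
      next
        case False
        then show ?thesis using ug by (auto simp: grid_def v_def rs_def)
      qed
    qed
    then show ?thesis using W_ext[OF u(1) vg] i_def by auto
  qed
  have B: "label w i = 0" if w: "\<forall>j<d. q j \<le> w j \<and> w j \<le> q j + 1" and vW: "v \<in> W i" for w
  proof -
    have "close (rs w) v" using w unfolding close_def rs_def v_def by auto
    then show ?thesis using vW by (auto simp: label_def)
  qed
  obtain r s where r: "\<forall>j<d. q j \<le> r j \<and> r j \<le> q j + 1" and s: "\<forall>j<d. q j \<le> s j \<and> s j \<le> q j + 1"
    and rs: "label r i \<noteq> label s i" using q2 i by blast
  have "label r i = 0 \<or> label s i = 0" using rs by (auto simp: label_def split: if_splits)
  then have "v \<in> W i" using A r s by blast
  then show False using B r s rs by auto
qed



sublocale wrc \<subseteq> W: group "wreath H G" by (rule group_W)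

context wrc
begin

abbreviation "WW \<equiv> wreath H G"

lemma top_carrier: "g \<in> carrier G \<Longrightarrow> wr_top H G g \<in> carrier WW"
  by (simp add: wr_top_def wr_carrier)

lemma base_carrier: "a \<in> carrier H \<Longrightarrow> wr_base H G a \<in> carrier WW"
proof -
  assume a: "a \<in> carrier H"
  have "{\<gamma> \<in> carrier G. (if \<gamma> = \<one>\<^bsub>G\<^esub> then a else \<one>\<^bsub>H\<^esub>) \<noteq> \<one>\<^bsub>H\<^esub>} \<subseteq> {\<one>\<^bsub>G\<^esub>}" by auto
  then have "finite {\<gamma> \<in> carrier G. (if \<gamma> = \<one>\<^bsub>G\<^esub> then a else \<one>\<^bsub>H\<^esub>) \<noteq> \<one>\<^bsub>H\<^esub>}"
    using finite_subset by blast
  then show ?thesis using a by (simp add: wr_base_def wr_carrier)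
qed

lemma top_hom: "wr_top H G \<in> hom G WW"
  unfolding hom_def
proof (intro CollectI conjI ballI)
  show "wr_top H G \<in> carrier G \<rightarrow> carrier WW" using top_carrier by auto
  fix x y assume "x \<in> carrier G" "y \<in> carrier G"
  then show "wr_top H G (x \<otimes>\<^bsub>G\<^esub> y) = wr_top H G x \<otimes>\<^bsub>WW\<^esub> wr_top H G y"
  proof -
    have e: "(\<lambda>_. \<one>\<^bsub>H\<^esub>) = (\<lambda>\<gamma>::'g. if \<gamma> \<in> carrier G then \<one>\<^bsub>H\<^esub> \<otimes>\<^bsub>H\<^esub> \<one>\<^bsub>H\<^esub> else \<one>\<^bsub>H\<^esub>)"
      by (rule ext) simp
    show ?thesis unfolding wr_top_def wr_mult
      by (rule prod_eqI) (simp_all only: fst_conv snd_conv e)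
  qed
qed

lemma gens_carrier: "S \<subseteq> carrier G \<Longrightarrow> wr_gens H G S \<subseteq> carrier WW"
  unfolding wr_gens_def using top_carrier base_carrier by auto

lemma inv_W: assumes "x \<in> carrier WW" shows "inv\<^bsub>WW\<^esub> x = winv x"
  by (rule W.inv_equality[OF winv_l[OF assms] assms winv_closed[OF assms]])

lemma inv_top: assumes g: "g \<in> carrier G" shows "inv\<^bsub>WW\<^esub> (wr_top H G g) = wr_top H G (inv\<^bsub>G\<^esub> g)"
proof -
  have e: "(\<lambda>\<gamma>::'g. if \<gamma> \<in> carrier G then inv\<^bsub>H\<^esub> \<one>\<^bsub>H\<^esub> else \<one>\<^bsub>H\<^esub>) = (\<lambda>_. \<one>\<^bsub>H\<^esub>)"
    by (rule ext) simp
  show ?thesis unfolding inv_W[OF top_carrier[OF g]] winv_def unfolding wr_top_def fst_conv snd_conv e ..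
qed

lemma inv_base: assumes a: "a \<in> carrier H" shows "inv\<^bsub>WW\<^esub> (wr_base H G a) = wr_base H G (inv\<^bsub>H\<^esub> a)"
proof -
  have "(\<lambda>\<gamma>. if \<gamma> \<in> carrier G then inv\<^bsub>H\<^esub> (if \<one>\<^bsub>G\<^esub> \<otimes>\<^bsub>G\<^esub> \<gamma> = \<one>\<^bsub>G\<^esub> then a else \<one>\<^bsub>H\<^esub>) else \<one>\<^bsub>H\<^esub>)
      = (\<lambda>\<gamma>. if \<gamma> = \<one>\<^bsub>G\<^esub> then inv\<^bsub>H\<^esub> a else \<one>\<^bsub>H\<^esub>)"
  proof (rule ext)
    fix \<gamma> show "(if \<gamma> \<in> carrier G then inv\<^bsub>H\<^esub> (if \<one>\<^bsub>G\<^esub> \<otimes>\<^bsub>G\<^esub> \<gamma> = \<one>\<^bsub>G\<^esub> then a else \<one>\<^bsub>H\<^esub>) else \<one>\<^bsub>H\<^esub>)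
      = (if \<gamma> = \<one>\<^bsub>G\<^esub> then inv\<^bsub>H\<^esub> a else \<one>\<^bsub>H\<^esub>)"
      by (cases "\<gamma> \<in> carrier G") auto
  qed
  then show ?thesis unfolding inv_W[OF base_carrier[OF a]] winv_def unfolding wr_base_def fst_conv snd_conv by simp
qed

definition dq :: "('g \<Rightarrow> 'h) \<Rightarrow> ('g \<Rightarrow> 'h) \<Rightarrow> 'g \<Rightarrow> 'h" where
  "dq F F' = (\<lambda>\<gamma>. if \<gamma> \<in> carrier G then inv\<^bsub>H\<^esub> (F \<gamma>) \<otimes>\<^bsub>H\<^esub> F' \<gamma> else \<one>\<^bsub>H\<^esub>)"

lemma inv_F:
  assumes "(F, \<one>\<^bsub>G\<^esub>) \<in> carrier WW"
  shows "inv\<^bsub>WW\<^esub> (F, \<one>\<^bsub>G\<^esub>) = (\<lambda>\<gamma>. if \<gamma> \<in> carrier G then inv\<^bsub>H\<^esub> (F \<gamma>) else \<one>\<^bsub>H\<^esub>, \<one>\<^bsub>G\<^esub>)"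
proof -
  have "(\<lambda>\<gamma>. if \<gamma> \<in> carrier G then inv\<^bsub>H\<^esub> (F (\<one>\<^bsub>G\<^esub> \<otimes>\<^bsub>G\<^esub> \<gamma>)) else \<one>\<^bsub>H\<^esub>) =
        (\<lambda>\<gamma>. if \<gamma> \<in> carrier G then inv\<^bsub>H\<^esub> (F \<gamma>) else \<one>\<^bsub>H\<^esub>)"
    by (rule ext) simp
  then show ?thesis unfolding inv_W[OF assms] winv_def fst_conv snd_conv by simp
qed

lemma inv_mult_F:
  assumes "(F, \<one>\<^bsub>G\<^esub>) \<in> carrier WW" "(F', \<one>\<^bsub>G\<^esub>) \<in> carrier WW"
  shows "inv\<^bsub>WW\<^esub> (F, \<one>\<^bsub>G\<^esub>) \<otimes>\<^bsub>WW\<^esub> (F', \<one>\<^bsub>G\<^esub>) = (dq F F', \<one>\<^bsub>G\<^esub>)"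
proof -
  have "(\<lambda>\<gamma>. if \<gamma> \<in> carrier G then (if \<gamma> \<in> carrier G then inv\<^bsub>H\<^esub> (F \<gamma>) else \<one>\<^bsub>H\<^esub>) \<otimes>\<^bsub>H\<^esub> F' (inv\<^bsub>G\<^esub> \<one>\<^bsub>G\<^esub> \<otimes>\<^bsub>G\<^esub> \<gamma>) else \<one>\<^bsub>H\<^esub>)
     = dq F F'"
    by (rule ext) (simp add: dq_def)
  then show ?thesis unfolding inv_F[OF assms(1)] wr_mult by simp
qed

definition sg :: "'g \<Rightarrow> 'h \<Rightarrow> 'g \<Rightarrow> 'h" where
  "sg g a = (\<lambda>\<gamma>. if \<gamma> = g then a else \<one>\<^bsub>H\<^esub>)"

lemma sg_decomp:
  assumes g: "g \<in> carrier G" and a: "a \<in> carrier H"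
  shows "(sg g a, \<one>\<^bsub>G\<^esub>) = wr_top H G g \<otimes>\<^bsub>WW\<^esub> wr_base H G a \<otimes>\<^bsub>WW\<^esub> wr_top H G (inv\<^bsub>G\<^esub> g)"
proof -
  have e: "inv\<^bsub>G\<^esub> g \<otimes>\<^bsub>G\<^esub> \<gamma> = \<one>\<^bsub>G\<^esub> \<longleftrightarrow> \<gamma> = g" if "\<gamma> \<in> carrier G" for \<gamma>
    using G.inv_solve_left'[of "\<one>\<^bsub>G\<^esub>" g \<gamma>] that g by simp
  have "(\<lambda>\<gamma>. if \<gamma> = g then a else \<one>\<^bsub>H\<^esub>) =
    (\<lambda>\<gamma>. if \<gamma> \<in> carrier G then (if \<gamma> \<in> carrier G then \<one>\<^bsub>H\<^esub> \<otimes>\<^bsub>H\<^esub> (if inv\<^bsub>G\<^esub> g \<otimes>\<^bsub>G\<^esub> \<gamma> = \<one>\<^bsub>G\<^esub> then a else \<one>\<^bsub>H\<^esub>) else \<one>\<^bsub>H\<^esub>)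
        \<otimes>\<^bsub>H\<^esub> \<one>\<^bsub>H\<^esub> else \<one>\<^bsub>H\<^esub>)"
  proof (rule ext)
    fix \<gamma> show "(if \<gamma> = g then a else \<one>\<^bsub>H\<^esub>) =
    (if \<gamma> \<in> carrier G then (if \<gamma> \<in> carrier G then \<one>\<^bsub>H\<^esub> \<otimes>\<^bsub>H\<^esub> (if inv\<^bsub>G\<^esub> g \<otimes>\<^bsub>G\<^esub> \<gamma> = \<one>\<^bsub>G\<^esub> then a else \<one>\<^bsub>H\<^esub>) else \<one>\<^bsub>H\<^esub>)
        \<otimes>\<^bsub>H\<^esub> \<one>\<^bsub>H\<^esub> else \<one>\<^bsub>H\<^esub>)"
    proof (cases "\<gamma> \<in> carrier G")
      case True
      then show ?thesis using e[OF True] a by simp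
    next
      case False
      then have "\<gamma> \<noteq> g" using g by auto
      then show ?thesis using False by simp
    qed
  qed
  note A = this
  have B: "g \<otimes>\<^bsub>G\<^esub> \<one>\<^bsub>G\<^esub> \<otimes>\<^bsub>G\<^esub> inv\<^bsub>G\<^esub> g = \<one>\<^bsub>G\<^esub>" using g by simp
  show ?thesis
    unfolding wr_top_def wr_base_def wr_mult sg_def
    by (rule prod_eqI) (simp_all only: fst_conv snd_conv A B)
qed

lemma sg_wl:
  assumes S: "S \<subseteq> carrier G" and g: "g \<in> carrier G" and a: "a \<in> carrier H"
    and gw: "hasw G S g"
  shows "hasw WW (wr_gens H G S) (sg g a, \<one>\<^bsub>G\<^esub>) \<and>
         word_length WW (wr_gens H G S) (sg g a, \<one>\<^bsub>G\<^esub>) \<le> 2 * word_length G S g + 1"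
proof -
  let ?T = "wr_gens H G S"
  have T: "?T \<subseteq> carrier WW" using gens_carrier[OF S] .
  have hS: "wr_top H G ` S \<subseteq> ?T" unfolding wr_gens_def by auto
  have t1: "hasw WW ?T (wr_top H G g) \<and> word_length WW ?T (wr_top H G g) \<le> word_length G S g"
    by (rule hom_hasw[OF G.group_axioms W.group_axioms top_hom S T hS gw])
  have gi: "hasw G S (inv\<^bsub>G\<^esub> g) \<and> word_length G S (inv\<^bsub>G\<^esub> g) \<le> word_length G S g"
    by (rule G.wl_inv[OF S gw])
  have t2: "hasw WW ?T (wr_top H G (inv\<^bsub>G\<^esub> g)) \<and> word_length WW ?T (wr_top H G (inv\<^bsub>G\<^esub> g)) \<le> word_length G S (inv\<^bsub>G\<^esub> g)"
    using gi by (intro hom_hasw[OF G.group_axioms W.group_axioms top_hom S T hS]) auto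
  have b: "hasw WW ?T (wr_base H G a) \<and> word_length WW ?T (wr_base H G a) \<le> 1"
  proof (cases "a = \<one>\<^bsub>H\<^esub>")
    case True
    then have "wr_base H G a = \<one>\<^bsub>WW\<^esub>" by (auto simp: wr_base_def wr_one)
    then show ?thesis using W.wl_one[of ?T] by simp
  next
    case False
    then have "wr_base H G a \<in> ?T" using a unfolding wr_gens_def by auto
    then show ?thesis using W.wl_gen[OF T] by blast
  qed
  have m1: "hasw WW ?T (wr_top H G g \<otimes>\<^bsub>WW\<^esub> wr_base H G a) \<and>
     word_length WW ?T (wr_top H G g \<otimes>\<^bsub>WW\<^esub> wr_base H G a) \<le> word_length WW ?T (wr_top H G g) + word_length WW ?T (wr_base H G a)"
    using W.wl_mult[OF T] t1 b by blast
  have m2: "hasw WW ?T (wr_top H G g \<otimes>\<^bsub>WW\<^esub> wr_base H G a \<otimes>\<^bsub>WW\<^esub> wr_top H G (inv\<^bsub>G\<^esub> g)) \<and>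
     word_length WW ?T (wr_top H G g \<otimes>\<^bsub>WW\<^esub> wr_base H G a \<otimes>\<^bsub>WW\<^esub> wr_top H G (inv\<^bsub>G\<^esub> g)) \<le>
     word_length WW ?T (wr_top H G g \<otimes>\<^bsub>WW\<^esub> wr_base H G a) + word_length WW ?T (wr_top H G (inv\<^bsub>G\<^esub> g))"
    using W.wl_mult[OF T] m1 t2 by blast
  show ?thesis unfolding sg_decomp[OF g a] using m1 m2 t1 t2 b gi by linarith
qed

end


context wrc
begin

lemma upper:
  assumes S: "S \<subseteq> carrier G" and P: "finite P"
    and PG: "\<forall>g\<in>P. g \<in> carrier G \<and> hasw G S g \<and> 2 * word_length G S g + 1 \<le> L"
  shows "\<forall>F F'. (F, \<one>\<^bsub>G\<^esub>) \<in> carrier WW \<longrightarrow> (F', \<one>\<^bsub>G\<^esub>) \<in> carrier WW \<longrightarrow> (\<forall>\<gamma>. F \<gamma> \<noteq> F' \<gamma> \<longrightarrow> \<gamma> \<in> P) \<longrightarrow>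
    hasw WW (wr_gens H G S) (inv\<^bsub>WW\<^esub> (F, \<one>\<^bsub>G\<^esub>) \<otimes>\<^bsub>WW\<^esub> (F', \<one>\<^bsub>G\<^esub>)) \<and>
    word_length WW (wr_gens H G S) (inv\<^bsub>WW\<^esub> (F, \<one>\<^bsub>G\<^esub>) \<otimes>\<^bsub>WW\<^esub> (F', \<one>\<^bsub>G\<^esub>)) \<le> card P * L"
  using P PG
proof (induction P rule: finite_induct)
  case empty
  show ?case
  proof (intro allI impI)
    fix F F' assume cF: "(F, \<one>\<^bsub>G\<^esub>) \<in> carrier WW" and cF': "(F', \<one>\<^bsub>G\<^esub>) \<in> carrier WW"
      and d: "\<forall>\<gamma>. F \<gamma> \<noteq> F' \<gamma> \<longrightarrow> \<gamma> \<in> {}"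
    then have "F = F'" by auto
    then have "inv\<^bsub>WW\<^esub> (F, \<one>\<^bsub>G\<^esub>) \<otimes>\<^bsub>WW\<^esub> (F', \<one>\<^bsub>G\<^esub>) = \<one>\<^bsub>WW\<^esub>" using cF by simp
    then show "hasw WW (wr_gens H G S) (inv\<^bsub>WW\<^esub> (F, \<one>\<^bsub>G\<^esub>) \<otimes>\<^bsub>WW\<^esub> (F', \<one>\<^bsub>G\<^esub>)) \<and>
      word_length WW (wr_gens H G S) (inv\<^bsub>WW\<^esub> (F, \<one>\<^bsub>G\<^esub>) \<otimes>\<^bsub>WW\<^esub> (F', \<one>\<^bsub>G\<^esub>)) \<le> card {} * L"
      using W.wl_one[of "wr_gens H G S"] by simp
  qed
next
  case (insert g P)
  let ?T = "wr_gens H G S"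
  have T: "?T \<subseteq> carrier WW" using gens_carrier[OF S] .
  have g: "g \<in> carrier G" "hasw G S g" "2 * word_length G S g + 1 \<le> L" using insert.prems by auto
  show ?case
  proof (intro allI impI)
    fix F F' assume cF: "(F, \<one>\<^bsub>G\<^esub>) \<in> carrier WW" and cF': "(F', \<one>\<^bsub>G\<^esub>) \<in> carrier WW"
      and d: "\<forall>\<gamma>. F \<gamma> \<noteq> F' \<gamma> \<longrightarrow> \<gamma> \<in> insert g P"
    define F'' where "F'' = F'(g := F g)"
    have Fg: "F g \<in> carrier H" using cF g by (simp add: wr_carrier)
    have fin: "finite {\<gamma> \<in> carrier G. F'' \<gamma> \<noteq> \<one>\<^bsub>H\<^esub>}"
    proof (rule finite_subset)
      show "{\<gamma> \<in> carrier G. F'' \<gamma> \<noteq> \<one>\<^bsub>H\<^esub>} \<subseteq> insert g {\<gamma> \<in> carrier G. F' \<gamma> \<noteq> \<one>\<^bsub>H\<^esub>}"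
        by (auto simp: F''_def)
      show "finite (insert g {\<gamma> \<in> carrier G. F' \<gamma> \<noteq> \<one>\<^bsub>H\<^esub>})" using cF' by (simp add: wr_carrier)
    qed
    have cF'': "(F'', \<one>\<^bsub>G\<^esub>) \<in> carrier WW"
      using cF' Fg g(1) fin unfolding wr_carrier by (auto simp: F''_def)
    have d1: "\<forall>\<gamma>. F \<gamma> \<noteq> F'' \<gamma> \<longrightarrow> \<gamma> \<in> P" using d by (auto simp: F''_def)
    have IH: "hasw WW ?T (inv\<^bsub>WW\<^esub> (F, \<one>\<^bsub>G\<^esub>) \<otimes>\<^bsub>WW\<^esub> (F'', \<one>\<^bsub>G\<^esub>)) \<and>
      word_length WW ?T (inv\<^bsub>WW\<^esub> (F, \<one>\<^bsub>G\<^esub>) \<otimes>\<^bsub>WW\<^esub> (F'', \<one>\<^bsub>G\<^esub>)) \<le> card P * L"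
      using insert.IH insert.prems cF cF'' d1 by auto
    define a where "a = inv\<^bsub>H\<^esub> (F g) \<otimes>\<^bsub>H\<^esub> F' g"
    have a: "a \<in> carrier H" using Fg cF' g by (auto simp: a_def wr_carrier)
    have "dq F'' F' = sg g a"
    proof (rule ext)
      fix \<gamma> show "dq F'' F' \<gamma> = sg g a \<gamma>"
      proof (cases "\<gamma> \<in> carrier G")
        case True
        then have "F' \<gamma> \<in> carrier H" using cF' by (simp add: wr_carrier)
        then show ?thesis using True by (auto simp: dq_def sg_def F''_def a_def)
      next
        case False
        then have "\<gamma> \<noteq> g" using g by auto
        then show ?thesis using False by (simp add: dq_def sg_def)
      qed
    qed
    then have e2: "inv\<^bsub>WW\<^esub> (F'', \<one>\<^bsub>G\<^esub>) \<otimes>\<^bsub>WW\<^esub> (F', \<one>\<^bsub>G\<^esub>) = (sg g a, \<one>\<^bsub>G\<^esub>)"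
      using inv_mult_F[OF cF'' cF'] by simp
    have s2: "hasw WW ?T (inv\<^bsub>WW\<^esub> (F'', \<one>\<^bsub>G\<^esub>) \<otimes>\<^bsub>WW\<^esub> (F', \<one>\<^bsub>G\<^esub>)) \<and>
      word_length WW ?T (inv\<^bsub>WW\<^esub> (F'', \<one>\<^bsub>G\<^esub>) \<otimes>\<^bsub>WW\<^esub> (F', \<one>\<^bsub>G\<^esub>)) \<le> L"
      unfolding e2 using sg_wl[OF S g(1) a g(2)] g(3) by linarith
    have split: "inv\<^bsub>WW\<^esub> (F, \<one>\<^bsub>G\<^esub>) \<otimes>\<^bsub>WW\<^esub> (F', \<one>\<^bsub>G\<^esub>) =
      (inv\<^bsub>WW\<^esub> (F, \<one>\<^bsub>G\<^esub>) \<otimes>\<^bsub>WW\<^esub> (F'', \<one>\<^bsub>G\<^esub>)) \<otimes>\<^bsub>WW\<^esub> (inv\<^bsub>WW\<^esub> (F'', \<one>\<^bsub>G\<^esub>) \<otimes>\<^bsub>WW\<^esub> (F', \<one>\<^bsub>G\<^esub>))"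
    proof -
      have h1: "(F'', \<one>\<^bsub>G\<^esub>) \<otimes>\<^bsub>WW\<^esub> (inv\<^bsub>WW\<^esub> (F'', \<one>\<^bsub>G\<^esub>) \<otimes>\<^bsub>WW\<^esub> (F', \<one>\<^bsub>G\<^esub>)) = (F', \<one>\<^bsub>G\<^esub>)"
        using cF' cF'' by (simp add: W.m_assoc[symmetric])
      show ?thesis using cF cF' cF'' by (simp add: W.m_assoc h1)
    qed
    have m: "hasw WW ?T (inv\<^bsub>WW\<^esub> (F, \<one>\<^bsub>G\<^esub>) \<otimes>\<^bsub>WW\<^esub> (F', \<one>\<^bsub>G\<^esub>)) \<and>
      word_length WW ?T (inv\<^bsub>WW\<^esub> (F, \<one>\<^bsub>G\<^esub>) \<otimes>\<^bsub>WW\<^esub> (F', \<one>\<^bsub>G\<^esub>)) \<le>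
      word_length WW ?T (inv\<^bsub>WW\<^esub> (F, \<one>\<^bsub>G\<^esub>) \<otimes>\<^bsub>WW\<^esub> (F'', \<one>\<^bsub>G\<^esub>)) + word_length WW ?T (inv\<^bsub>WW\<^esub> (F'', \<one>\<^bsub>G\<^esub>) \<otimes>\<^bsub>WW\<^esub> (F', \<one>\<^bsub>G\<^esub>))"
      unfolding split using W.wl_mult[OF T] IH s2 by blast
    have "card (insert g P) * L = card P * L + L" using insert.hyps by simp
    then show "hasw WW ?T (inv\<^bsub>WW\<^esub> (F, \<one>\<^bsub>G\<^esub>) \<otimes>\<^bsub>WW\<^esub> (F', \<one>\<^bsub>G\<^esub>)) \<and>
      word_length WW ?T (inv\<^bsub>WW\<^esub> (F, \<one>\<^bsub>G\<^esub>) \<otimes>\<^bsub>WW\<^esub> (F', \<one>\<^bsub>G\<^esub>)) \<le> card (insert g P) * L"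
      using m IH s2 by linarith
  qed
qed

definition supp :: "('g \<Rightarrow> 'h) \<Rightarrow> 'g set" where
  "supp F = {\<gamma> \<in> carrier G. F \<gamma> \<noteq> \<one>\<^bsub>H\<^esub>}"

lemma letter_cases:
  assumes S: "S \<subseteq> carrier G" and a: "a \<in> wr_gens H G S \<union> m_inv WW ` wr_gens H G S"
  shows "(\<exists>b\<in>carrier G. a = wr_top H G b) \<or> (\<exists>k\<in>carrier H. a = wr_base H G k)"
proof -
  have base: "(\<exists>b\<in>carrier G. a = wr_top H G b) \<or> (\<exists>k\<in>carrier H. a = wr_base H G k)"
    if "a \<in> wr_gens H G S" for a
    using that S unfolding wr_gens_def by blast
  show ?thesis
  proof (cases "a \<in> wr_gens H G S")
    case True then show ?thesis using base by blast
  next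
    case False
    then obtain t where t: "t \<in> wr_gens H G S" "a = inv\<^bsub>WW\<^esub> t" using a by blast
    from base[OF t(1)] show ?thesis
    proof
      assume "\<exists>b\<in>carrier G. t = wr_top H G b"
      then obtain b where "b \<in> carrier G" "t = wr_top H G b" by blast
      then have "a = wr_top H G (inv\<^bsub>G\<^esub> b)" "inv\<^bsub>G\<^esub> b \<in> carrier G" using t inv_top by auto
      then show ?thesis by blast
    next
      assume "\<exists>k\<in>carrier H. t = wr_base H G k"
      then obtain k where "k \<in> carrier H" "t = wr_base H G k" by blast
      then have "a = wr_base H G (inv\<^bsub>H\<^esub> k)" "inv\<^bsub>H\<^esub> k \<in> carrier H" using t inv_base by auto
      then show ?thesis by blast
    qed
  qed
qed

lemma lower_word:
  assumes S: "S \<subseteq> carrier G"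
  shows "set ws \<subseteq> wr_gens H G S \<union> m_inv WW ` wr_gens H G S \<Longrightarrow>
    card (supp (fst (foldr (\<otimes>\<^bsub>WW\<^esub>) ws \<one>\<^bsub>WW\<^esub>))) \<le> length ws"
proof (induction ws)
  case Nil
  have "supp (fst (\<one>\<^bsub>WW\<^esub>)) = {}" by (simp add: supp_def wr_one)
  then show ?case by simp
next
  case (Cons a ws)
  have T: "wr_gens H G S \<subseteq> carrier WW" using gens_carrier[OF S] .
  have IH: "card (supp (fst (foldr (\<otimes>\<^bsub>WW\<^esub>) ws \<one>\<^bsub>WW\<^esub>))) \<le> length ws" using Cons by auto
  have yc: "foldr (\<otimes>\<^bsub>WW\<^esub>) ws \<one>\<^bsub>WW\<^esub> \<in> carrier WW"
    using Cons.prems W.letters_carrier[OF T] by (intro W.foldr_closed) auto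
  obtain fy bb where y: "foldr (\<otimes>\<^bsub>WW\<^esub>) ws \<one>\<^bsub>WW\<^esub> = (fy, bb)" by (cases "foldr (\<otimes>\<^bsub>WW\<^esub>) ws \<one>\<^bsub>WW\<^esub>")
  have fyc: "\<forall>\<gamma>\<in>carrier G. fy \<gamma> \<in> carrier H" "finite (supp fy)"
    using yc y by (auto simp: wr_carrier supp_def)
  have IH': "card (supp fy) \<le> length ws" using IH y by simp
  have e: "foldr (\<otimes>\<^bsub>WW\<^esub>) (a # ws) \<one>\<^bsub>WW\<^esub> = a \<otimes>\<^bsub>WW\<^esub> (fy, bb)" using y by simp
  have "a \<in> wr_gens H G S \<union> m_inv WW ` wr_gens H G S" using Cons.prems by auto
  from letter_cases[OF S this] show ?case
  proof
    assume "\<exists>b\<in>carrier G. a = wr_top H G b"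
    then obtain b where b: "b \<in> carrier G" "a = wr_top H G b" by blast
    have "supp (fst (a \<otimes>\<^bsub>WW\<^esub> (fy, bb))) \<subseteq> (\<lambda>\<delta>. b \<otimes>\<^bsub>G\<^esub> \<delta>) ` supp fy"
    proof
      fix \<gamma> assume "\<gamma> \<in> supp (fst (a \<otimes>\<^bsub>WW\<^esub> (fy, bb)))"
      then have g: "\<gamma> \<in> carrier G" "\<one>\<^bsub>H\<^esub> \<otimes>\<^bsub>H\<^esub> fy (inv\<^bsub>G\<^esub> b \<otimes>\<^bsub>G\<^esub> \<gamma>) \<noteq> \<one>\<^bsub>H\<^esub>"
        using b by (auto simp: supp_def wr_top_def wr_mult)
      have c: "inv\<^bsub>G\<^esub> b \<otimes>\<^bsub>G\<^esub> \<gamma> \<in> carrier G" using g b by auto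
      then have "fy (inv\<^bsub>G\<^esub> b \<otimes>\<^bsub>G\<^esub> \<gamma>) \<noteq> \<one>\<^bsub>H\<^esub>" using g fyc by auto
      then have "inv\<^bsub>G\<^esub> b \<otimes>\<^bsub>G\<^esub> \<gamma> \<in> supp fy" using c by (simp add: supp_def)
      moreover have "\<gamma> = b \<otimes>\<^bsub>G\<^esub> (inv\<^bsub>G\<^esub> b \<otimes>\<^bsub>G\<^esub> \<gamma>)" using g b by (simp add: G.m_assoc[symmetric])
      ultimately show "\<gamma> \<in> (\<lambda>\<delta>. b \<otimes>\<^bsub>G\<^esub> \<delta>) ` supp fy" by blast
    qed
    then have "card (supp (fst (a \<otimes>\<^bsub>WW\<^esub> (fy, bb)))) \<le> card ((\<lambda>\<delta>. b \<otimes>\<^bsub>G\<^esub> \<delta>) ` supp fy)"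
      using fyc by (intro card_mono) auto
    also have "\<dots> \<le> card (supp fy)" by (rule card_image_le[OF fyc(2)])
    finally show ?thesis using e IH' by simp
  next
    assume "\<exists>k\<in>carrier H. a = wr_base H G k"
    then obtain k where k: "k \<in> carrier H" "a = wr_base H G k" by blast
    have "supp (fst (a \<otimes>\<^bsub>WW\<^esub> (fy, bb))) \<subseteq> insert \<one>\<^bsub>G\<^esub> (supp fy)"
    proof
      fix \<gamma> assume A: "\<gamma> \<in> supp (fst (a \<otimes>\<^bsub>WW\<^esub> (fy, bb)))"
      show "\<gamma> \<in> insert \<one>\<^bsub>G\<^esub> (supp fy)"
      proof (cases "\<gamma> = \<one>\<^bsub>G\<^esub>")
        case False
        then have g: "\<gamma> \<in> carrier G" "\<one>\<^bsub>H\<^esub> \<otimes>\<^bsub>H\<^esub> fy (inv\<^bsub>G\<^esub> \<one>\<^bsub>G\<^esub> \<otimes>\<^bsub>G\<^esub> \<gamma>) \<noteq> \<one>\<^bsub>H\<^esub>"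
          using A k by (auto simp: supp_def wr_base_def wr_mult)
        then have "fy \<gamma> \<noteq> \<one>\<^bsub>H\<^esub>" using fyc by auto
        then show ?thesis using g by (simp add: supp_def)
      qed simp
    qed
    then have "card (supp (fst (a \<otimes>\<^bsub>WW\<^esub> (fy, bb)))) \<le> card (insert \<one>\<^bsub>G\<^esub> (supp fy))"
      using fyc by (intro card_mono) auto
    also have "\<dots> \<le> card (supp fy) + 1" by (simp add: card_insert_if fyc(2))
    finally show ?thesis using e IH' by simp
  qed
qed

lemma lower:
  assumes S: "S \<subseteq> carrier G" and z: "hasw WW (wr_gens H G S) z"
  shows "card (supp (fst z)) \<le> word_length WW (wr_gens H G S) z"
proof -
  obtain ws where w: "length ws = word_length WW (wr_gens H G S) z"
    "set ws \<subseteq> wr_gens H G S \<union> m_inv WW ` wr_gens H G S" "z = foldr (\<otimes>\<^bsub>WW\<^esub>) ws \<one>\<^bsub>WW\<^esub>"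
    using W.wl_word[OF z] by blast
  show ?thesis using lower_word[OF S w(2)] w by simp
qed

end


context wrc
begin

lemma no_control:
  assumes S: "S \<subseteq> carrier G" and gen: "generate G S = carrier G"
    and h: "h \<in> carrier H" "h \<noteq> \<one>\<^bsub>H\<^esub>"
    and C: "C > 0" and ng: "\<not> growth_linearly_bounded G S"
  shows "\<not> control_function (carrier WW) (word_dist WW (wr_gens H G S)) n (\<lambda>r. ereal (C * r))"
proof
  assume cf: "control_function (carrier WW) (word_dist WW (wr_gens H G S)) n (\<lambda>r. ereal (C * r))"
  let ?T = "wr_gens H G S"
  let ?dist = "word_dist WW ?T"
  define d where "d = Suc n"
  have d0: "0 < d" by (simp add: d_def)
  define a where "a = 4 * real d * real d * C"
  define b where "b = real d * C * (6 * real d + 1) + 4 * real d"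
  obtain R where R0: "R \<ge> 0" and Rg: "real (growth G S R) > a * R + b"
    using ng unfolding growth_linearly_bounded_def by (meson not_le)
  define B where "B = {g \<in> carrier G. real (word_length G S g) < R}"
  have cardB: "growth G S R = card B" by (simp add: growth_def B_def)
  define K where "K = nat \<lceil>R\<rceil>"
  define L where "L = 2 * K + 1"
  define r where "r = real (2 * d * L + 1)"
  define p where "p = nat \<lceil>C * r\<rceil> + 3"
  have r0: "r > 0" unfolding r_def of_nat_0_less_iff by simp
  have Cr: "C * r > 0" using C r0 by simp
  have Kle: "real K \<le> R + 1" unfolding K_def using R0 by linarith
  have pge: "real p \<ge> C * r + 3" unfolding p_def using Cr by linarith
  have ple: "real p \<le> C * r + 4" unfolding p_def using Cr by linarith
  have p3: "p \<ge> 3" by (simp add: p_def)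
  have rle: "r \<le> 4 * real d * R + 6 * real d + 1"
  proof -
    have "r = 2 * real d * (2 * real K + 1) + 1" by (simp add: r_def L_def algebra_simps)
    also have "\<dots> \<le> 2 * real d * (2 * (R + 1) + 1) + 1"
      using Kle by (intro add_right_mono mult_left_mono) auto
    finally show ?thesis by (simp add: algebra_simps)
  qed
  have dp_le: "real (d * p) < real (card B)"
  proof -
    have "real (d * p) = real d * real p" by simp
    also have "\<dots> \<le> real d * (C * r + 4)" using ple by (intro mult_left_mono) auto
    also have "\<dots> \<le> real d * (C * (4 * real d * R + 6 * real d + 1) + 4)"
      using rle C by (intro mult_left_mono add_right_mono) auto
    also have "\<dots> = a * R + b" by (simp add: a_def b_def algebra_simps)
    also have "\<dots> < real (card B)" using Rg cardB by simp
    finally show ?thesis .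
  qed
  have dplt: "d * p < card B" using dp_le by (simp only: of_nat_less_iff)
  then have dpB: "d * p \<le> card B" by simp
  have finB: "finite B" using dplt card_gt_0_iff by fastforce
  obtain A where A: "A \<subseteq> B" "card A = d * p" "finite A"
    using obtain_subset_with_card_n[OF dpB] by blast
  obtain e where e: "bij_betw e {0..<d * p} A" using ex_bij_betw_nat_finite[OF A(3)] A(2) by auto
  have e_inj: "inj_on e {0..<d * p}" using e by (simp add: bij_betw_def)
  have eB: "e k \<in> B" if "k < d * p" for k using e A(1) that by (auto simp: bij_betw_def)
  have idx_lt: "j * p + t < d * p" if "j < d" "t < p" for j t
  proof -
    have "j * p + t < j * p + p" using that by simp
    also have "\<dots> = Suc j * p" by simp
    also have "\<dots> \<le> d * p" using that by (intro mult_right_mono) auto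
    finally show ?thesis .
  qed
  have idx_inj: "j = j' \<and> t = t'" if "j * p + t = j' * p + t'" "t < p" "t' < p" for j t j' t'
  proof -
    have p0: "p \<noteq> 0" using that(2) by auto
    have a1: "(t + j * p) div p = j" "(t + j * p) mod p = t" using that(2) p0 by simp_all
    have a2: "(t' + j' * p) div p = j'" "(t' + j' * p) mod p = t'" using that(3) p0 by simp_all
    have "t + j * p = t' + j' * p" using that(1) by simp
    then show ?thesis using a1 a2 by metis
  qed
  have e_idx_inj: "j = j' \<and> t = t'" if "e (j * p + t) = e (j' * p + t')" "j < d" "t < p" "j' < d" "t' < p" for j t j' t'
  proof -
    have "j * p + t = j' * p + t'"
      using inj_onD[OF e_inj that(1)] idx_lt that by auto
    then show ?thesis using idx_inj that by blast
  qed
  define F where "F x = (\<lambda>\<gamma>. if (\<exists>j<d. \<exists>t<x j. \<gamma> = e (j * p + t)) then h else \<one>\<^bsub>H\<^esub>)" for x :: "nat \<Rightarrow> nat"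
  define \<phi> where "\<phi> x = (F x, \<one>\<^bsub>G\<^esub>)" for x
  have xp: "x j \<le> p" if "x \<in> grid d p" "j < d" for x j using that by (simp add: grid_def)
  have Fpos: "e (j * p + t) \<in> B" if "x \<in> grid d p" "j < d" "t < x j" for x j t
    using eB idx_lt xp that by (meson order_less_le_trans)
  have Fsupp: "{\<gamma> \<in> carrier G. F x \<gamma> \<noteq> \<one>\<^bsub>H\<^esub>} \<subseteq> e ` {0..<d * p}" if "x \<in> grid d p" for x
  proof
    fix \<gamma> assume "\<gamma> \<in> {\<gamma> \<in> carrier G. F x \<gamma> \<noteq> \<one>\<^bsub>H\<^esub>}"
    then obtain j t where jt: "j < d" "t < x j" "\<gamma> = e (j * p + t)" by (auto simp: F_def split: if_splits)
    then have "j * p + t < d * p" using idx_lt xp that by (meson order_less_le_trans)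
    then show "\<gamma> \<in> e ` {0..<d * p}" using jt by auto
  qed
  have phi_c: "\<phi> x \<in> carrier WW" if "x \<in> grid d p" for x
  proof -
    have "\<forall>\<gamma>\<in>carrier G. F x \<gamma> \<in> carrier H" using h by (simp add: F_def)
    moreover have "\<forall>\<gamma>. \<gamma> \<notin> carrier G \<longrightarrow> F x \<gamma> = \<one>\<^bsub>H\<^esub>"
      using Fpos[OF that] by (auto simp: F_def B_def)
    moreover have "finite {\<gamma> \<in> carrier G. F x \<gamma> \<noteq> \<one>\<^bsub>H\<^esub>}"
      using Fsupp[OF that] finite_subset by blast
    ultimately show ?thesis by (simp add: \<phi>_def wr_carrier)
  qed
  have Bgood: "g \<in> carrier G \<and> hasw G S g \<and> 2 * word_length G S g + 1 \<le> L" if "g \<in> B" for g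
  proof -
    have g: "g \<in> carrier G" "real (word_length G S g) < R" using that by (auto simp: B_def)
    have "real (word_length G S g) < real K" using g(2) unfolding K_def by linarith
    then have "word_length G S g \<le> K" by simp
    moreover have "hasw G S g" using G.generate_hasw[OF S] g gen by auto
    ultimately show ?thesis using g by (simp add: L_def)
  qed
  define P where "P x y = e ` {k. \<exists>j<d. \<exists>t. k = j * p + t \<and> min (x j) (y j) \<le> t \<and> t < max (x j) (y j)}" for x y :: "nat \<Rightarrow> nat"
  have P_sub: "P x y \<subseteq> B" if "x \<in> grid d p" "y \<in> grid d p" for x y
  proof
    fix \<gamma> assume "\<gamma> \<in> P x y"
    then obtain j t where jt: "j < d" "min (x j) (y j) \<le> t" "t < max (x j) (y j)" "\<gamma> = e (j * p + t)"
      by (auto simp: P_def)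
    have "t < p" using jt xp[OF that(1) jt(1)] xp[OF that(2) jt(1)] by linarith
    then show "\<gamma> \<in> B" using eB idx_lt jt by auto
  qed
  have P_fin: "finite (P x y)" if "x \<in> grid d p" "y \<in> grid d p" for x y
    using P_sub[OF that] finB finite_subset by blast
  have P_diff: "\<forall>\<gamma>. F x \<gamma> \<noteq> F y \<gamma> \<longrightarrow> \<gamma> \<in> P x y" for x y
  proof (intro allI impI)
    fix \<gamma> assume ne: "F x \<gamma> \<noteq> F y \<gamma>"
    have key: "\<gamma> \<in> P x y" if A1: "\<exists>j<d. \<exists>t<u j. \<gamma> = e (j * p + t)" and A2: "\<not> (\<exists>j<d. \<exists>t<v j. \<gamma> = e (j * p + t))"
      and uv: "(u = x \<and> v = y) \<or> (u = y \<and> v = x)" for u v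
    proof -
      obtain j t where jt: "j < d" "t < u j" "\<gamma> = e (j * p + t)" using A1 by blast
      have "\<not> t < v j" using A2 jt by blast
      then have "min (x j) (y j) \<le> t \<and> t < max (x j) (y j)" using jt uv by auto
      then show ?thesis unfolding P_def using jt by blast
    qed
    show "\<gamma> \<in> P x y"
      using ne key[of x y] key[of y x] by (auto simp: F_def split: if_splits)
  qed
  have P_card: "card (P x y) \<le> 2 * d" if "near x y" for x y
  proof -
    let ?I = "\<lambda>j. (\<lambda>t. j * p + t) ` {min (x j) (y j)..<max (x j) (y j)}"
    have sub: "{k. \<exists>j<d. \<exists>t. k = j * p + t \<and> min (x j) (y j) \<le> t \<and> t < max (x j) (y j)} \<subseteq> (\<Union>j\<in>{..<d}. ?I j)"
      by auto
    have "card (P x y) \<le> card {k. \<exists>j<d. \<exists>t. k = j * p + t \<and> min (x j) (y j) \<le> t \<and> t < max (x j) (y j)}"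
      unfolding P_def by (rule card_image_le) (rule finite_subset[OF sub], auto)
    also have "\<dots> \<le> card (\<Union>j\<in>{..<d}. ?I j)" by (rule card_mono[OF _ sub]) auto
    also have "\<dots> \<le> (\<Sum>j\<in>{..<d}. card (?I j))" by (rule card_UN_le) simp
    also have "\<dots> \<le> (\<Sum>j\<in>{..<d}. 2)"
    proof (rule sum_mono)
      fix j assume "j \<in> {..<d}"
      have "card (?I j) \<le> card {min (x j) (y j)..<max (x j) (y j)}" by (rule card_image_le) simp
      also have "\<dots> \<le> 2"
      proof -
        have "x j \<le> y j + 2" "y j \<le> x j + 2" using that unfolding near_def by auto
        then show ?thesis by (simp add: min_def max_def) linarith
      qed
      finally show "card (?I j) \<le> 2" .
    qed
    also have "\<dots> = 2 * d" by simp
    finally show ?thesis .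
  qed
  have up: "hasw WW ?T (inv\<^bsub>WW\<^esub> (\<phi> x) \<otimes>\<^bsub>WW\<^esub> \<phi> y) \<and>
      word_length WW ?T (inv\<^bsub>WW\<^esub> (\<phi> x) \<otimes>\<^bsub>WW\<^esub> \<phi> y) \<le> card (P x y) * L"
    if "x \<in> grid d p" "y \<in> grid d p" for x y
  proof -
    have "\<forall>g\<in>P x y. g \<in> carrier G \<and> hasw G S g \<and> 2 * word_length G S g + 1 \<le> L"
      using P_sub[OF that] Bgood by blast
    from upper[OF S P_fin[OF that] this] show ?thesis
      using phi_c[OF that(1)] phi_c[OF that(2)] P_diff[of x y] unfolding \<phi>_def by blast
  qed
  have dist_near: "?dist (\<phi> x) (\<phi> y) < r" if "x \<in> grid d p" "y \<in> grid d p" "near x y" for x y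
  proof -
    have "word_length WW ?T (inv\<^bsub>WW\<^esub> (\<phi> x) \<otimes>\<^bsub>WW\<^esub> \<phi> y) \<le> card (P x y) * L" using up[OF that(1,2)] by blast
    also have "\<dots> \<le> 2 * d * L" using P_card[OF that(3)] by (intro mult_right_mono) auto
    finally have "real (word_length WW ?T (inv\<^bsub>WW\<^esub> (\<phi> x) \<otimes>\<^bsub>WW\<^esub> \<phi> y)) \<le> real (2 * d * L)" by linarith
    then show ?thesis unfolding word_dist_def r_def by simp
  qed
  have dist_far: "real (y i - x i) \<le> ?dist (\<phi> x) (\<phi> y)"
    if xg: "x \<in> grid d p" and yg: "y \<in> grid d p" and i: "i < d" for x y i
  proof -
    let ?z = "inv\<^bsub>WW\<^esub> (\<phi> x) \<otimes>\<^bsub>WW\<^esub> \<phi> y"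
    have z: "?z = (dq (F x) (F y), \<one>\<^bsub>G\<^esub>)" using inv_mult_F phi_c[OF xg] phi_c[OF yg] unfolding \<phi>_def by blast
    let ?Q = "e ` ((\<lambda>t. i * p + t) ` {x i..<y i})"
    have Qsub: "?Q \<subseteq> supp (fst ?z)"
    proof
      fix \<gamma> assume "\<gamma> \<in> ?Q"
      then obtain k where k: "k \<in> (\<lambda>t. i * p + t) ` {x i..<y i}" "\<gamma> = e k" by blast
      then obtain t where t0: "t \<in> {x i..<y i}" "k = i * p + t" by blast
      then have t: "x i \<le> t" "t < y i" "\<gamma> = e (i * p + t)" using k by auto
      have tp: "t < p" using t xp[OF yg i] by linarith
      have gB: "\<gamma> \<in> B" using eB idx_lt[OF i tp] t by auto
      have Fy: "F y \<gamma> = h" using t i by (auto simp: F_def)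
      have Fx: "F x \<gamma> = \<one>\<^bsub>H\<^esub>"
      proof (rule ccontr)
        assume "F x \<gamma> \<noteq> \<one>\<^bsub>H\<^esub>"
        then obtain j t' where jt: "j < d" "t' < x j" "\<gamma> = e (j * p + t')" by (auto simp: F_def split: if_splits)
        have "t' < p" using jt xp[OF xg jt(1)] by linarith
        then have "j = i \<and> t' = t" using e_idx_inj[of j t' i t] jt t i tp by auto
        then show False using jt t by auto
      qed
      have "dq (F x) (F y) \<gamma> = h" using gB Fx Fy h by (simp add: dq_def B_def)
      then show "\<gamma> \<in> supp (fst ?z)" using z gB h by (simp add: supp_def B_def)
    qed
    have "card ?Q = card {x i..<y i}"
    proof -
      have "inj_on (\<lambda>t. i * p + t) {x i..<y i}" by (auto simp: inj_on_def)
      moreover have "inj_on e ((\<lambda>t. i * p + t) ` {x i..<y i})"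
      proof (rule inj_on_subset[OF e_inj])
        show "(\<lambda>t. i * p + t) ` {x i..<y i} \<subseteq> {0..<d * p}"
        proof
          fix k assume "k \<in> (\<lambda>t. i * p + t) ` {x i..<y i}"
          then obtain t where t: "t \<in> {x i..<y i}" "k = i * p + t" by blast
          then have "t < p" using xp[OF yg i] by auto
          then show "k \<in> {0..<d * p}" using idx_lt[OF i] t(2) by auto
        qed
      qed
      ultimately show ?thesis by (simp add: card_image)
    qed
    then have cQ: "card ?Q = y i - x i" by simp
    have zc: "?z \<in> carrier WW" using phi_c[OF xg] phi_c[OF yg] by simp
    have finS: "finite (supp (fst ?z))" using zc z by (simp add: supp_def wr_carrier)
    have "y i - x i \<le> card (supp (fst ?z))" using card_mono[OF finS Qsub] cQ by simp
    also have "\<dots> \<le> word_length WW ?T ?z" using lower[OF S] up[OF xg yg] by blast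
    finally show ?thesis unfolding word_dist_def by simp
  qed
  have dist0: "?dist (\<phi> x) (\<phi> x) = 0" if "x \<in> grid d p" for x
    using phi_c[OF that] W.wl_one[of ?T] unfolding word_dist_def by simp
  obtain U where U1: "\<forall>i\<le>n. U i \<subseteq> carrier WW" and U3: "\<forall>x\<in>carrier WW. \<exists>i\<le>n. open_ball (carrier WW) ?dist x r \<subseteq> U i"
    and U4: "\<forall>i\<le>n. \<forall>x y. r_connected ?dist r (U i) x y \<longrightarrow> ereal (?dist x y) \<le> ereal (C * r)"
  proof -
    have "\<exists>U :: nat \<Rightarrow> (('g \<Rightarrow> 'h) \<times> 'g) set. (\<forall>i\<le>n. U i \<subseteq> carrier WW) \<and> (\<Union>i\<le>n. U i) = carrier WW \<and>
        (\<forall>x\<in>carrier WW. \<exists>i\<le>n. open_ball (carrier WW) ?dist x r \<subseteq> U i) \<and>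
        (\<forall>i\<le>n. \<forall>x y. r_connected ?dist r (U i) x y \<longrightarrow> ereal (?dist x y) \<le> ereal (C * r))"
    proof -
      have imp: "0 < r \<longrightarrow> (\<exists>U :: nat \<Rightarrow> (('g \<Rightarrow> 'h) \<times> 'g) set. (\<forall>i\<le>n. U i \<subseteq> carrier WW) \<and> (\<Union>i\<le>n. U i) = carrier WW \<and>
        (\<forall>x\<in>carrier WW. \<exists>i\<le>n. open_ball (carrier WW) ?dist x r \<subseteq> U i) \<and>
        (\<forall>i\<le>n. \<forall>x y. r_connected ?dist r (U i) x y \<longrightarrow> ereal (?dist x y) \<le> ereal (C * r)))"
        using cf unfolding control_function_def by (rule spec)
      show ?thesis using imp r0 by (rule mp)
    qed
    then show ?thesis using that by blast
  qed
  define c where "c x = (LEAST i. i \<le> n \<and> open_ball (carrier WW) ?dist (\<phi> x) r \<subseteq> U i)" for x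
  have c_prop: "c x \<le> n \<and> open_ball (carrier WW) ?dist (\<phi> x) r \<subseteq> U (c x)" if "x \<in> grid d p" for x
  proof -
    have "\<exists>i. i \<le> n \<and> open_ball (carrier WW) ?dist (\<phi> x) r \<subseteq> U i" using U3 phi_c[OF that] by blast
    then show ?thesis unfolding c_def by (rule LeastI_ex)
  qed
  have col: "\<forall>x\<in>grid d p. c x < d" using c_prop by (auto simp: d_def less_Suc_eq_le)
  obtain i zs where i: "i < d" and zs: "ipath d p c i zs" "hd zs i \<le> 1" "p \<le> last zs i + 1"
  proof -
    have "0 < p" using p3 by simp
    from hex[OF d0 this col] show ?thesis using that by blast
  qed
  have zne: "zs \<noteq> []" and zg: "set zs \<subseteq> grid d p" and zc: "\<forall>z\<in>set zs. c z = i"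
    and znear: "\<forall>k. Suc k < length zs \<longrightarrow> near (zs ! k) (zs ! Suc k)"
    using zs(1) by (auto simp: ipath_def)
  have "r_connected ?dist r (U i) (\<phi> (hd zs)) (\<phi> (last zs))"
    unfolding r_connected_def
  proof (intro exI[of _ "map \<phi> zs"] conjI allI impI)
    show "map \<phi> zs \<noteq> []" using zne by simp
    show "hd (map \<phi> zs) = \<phi> (hd zs)" using zne by (simp add: hd_map)
    show "last (map \<phi> zs) = \<phi> (last zs)" using zne by (simp add: last_map)
    show "set (map \<phi> zs) \<subseteq> U i"
    proof
      fix w assume "w \<in> set (map \<phi> zs)"
      then obtain z where z: "z \<in> set zs" "w = \<phi> z" by auto
      have zg': "z \<in> grid d p" using z zg by auto
      have "\<phi> z \<in> open_ball (carrier WW) ?dist (\<phi> z) r"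
        using phi_c[OF zg'] dist0[OF zg'] r0 by (simp add: open_ball_def)
      then show "w \<in> U i" using c_prop[OF zg'] zc z by auto
    qed
    fix k assume k: "Suc k < length (map \<phi> zs)"
    then have "zs ! k \<in> grid d p" "zs ! Suc k \<in> grid d p" using zg by auto
    moreover have "near (zs ! k) (zs ! Suc k)" using znear k by simp
    ultimately have "?dist (\<phi> (zs ! k)) (\<phi> (zs ! Suc k)) < r" by (rule dist_near)
    then show "?dist (map \<phi> zs ! k) (map \<phi> zs ! Suc k) < r" using k by simp
  qed
  moreover have "i \<le> n" using i by (simp add: d_def)
  ultimately have "ereal (?dist (\<phi> (hd zs)) (\<phi> (last zs))) \<le> ereal (C * r)"
    using U4 by blast
  then have le: "?dist (\<phi> (hd zs)) (\<phi> (last zs)) \<le> C * r" by simp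
  have hg: "hd zs \<in> grid d p" and lg: "last zs \<in> grid d p" using zne zg by auto
  have "real (last zs i - hd zs i) \<le> ?dist (\<phi> (hd zs)) (\<phi> (last zs))"
    by (rule dist_far[OF hg lg i])
  moreover have "real (last zs i - hd zs i) \<ge> real p - 2" using zs(2,3) p3 by linarith
  ultimately show False using le pge by linarith
qed

end

theorem corollary5p2:
  fixes G :: "('g, 'x) monoid_scheme" and H :: "('h, 'y) monoid_scheme" and S :: "'g set"
  assumes "group G" and "finite S" and "S \<subseteq> carrier G" and "generate G S = carrier G"
    and "group H" and "finite (carrier H)" and "carrier H \<noteq> {\<one>\<^bsub>H\<^esub>}"
    and "\<not> growth_linearly_bounded G S"
  shows "dim_AN (carrier (wreath H G)) (word_dist (wreath H G) (wr_gens H G S)) = \<infinity>"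
proof -
  interpret wrc G H using assms(1,5) by (simp add: wrc_def)
  obtain h where h: "h \<in> carrier H" "h \<noteq> \<one>\<^bsub>H\<^esub>" using assms(7) H.one_closed by blast
  have "\<not> (\<exists>n. \<exists>C>0. control_function (carrier (wreath H G)) (word_dist (wreath H G) (wr_gens H G S)) n (\<lambda>r. ereal (C * r)))"
    using no_control[OF assms(3,4) h _ assms(8)] by blast
  then show ?thesis unfolding dim_AN_def by simp
qed

end
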